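(* Let $\mathcal{E}_{tr}$ be a finite set of training environments, $\mathcal{H}_\Phi$ a class of representations $\Phi:\mathcal{X}\to\mathcal{Z}$ and $\mathcal{H}_w$ a class of classifiers $w:\mathcal{Z}\to\mathbb{R}^k$ satisfying affine closure (for all $w_1,w_2\in\mathcal{H}_w$ and $c\in\mathbb{R}$, the pointwise sum $w_1+w_2$ and pointwise multiple $cw$ lie in $\mathcal{H}_w$). Then $\hat{\mathcal{S}}^{\mathsf{IV}}=\hat{\mathcal{S}}^{\mathsf{EIRM}}$.
   Context: For each environment $e\in\mathcal{E}_{tr}$ there is a distribution of $(X^e,Y^e)$ with $X^e\in\mathcal{X}\subseteq\mathbb{R}^n$, $Y^e\in\mathcal{Y}\subseteq\mathbb{R}^k$; for a loss $\ell$, $R^e(f)=\mathbb{E}[\ell(f(X^e),Y^e)]$. $\mathcal{Z}\subseteq\mathbb{R}^d$. $\mathcal{S}^{\mathsf{IV}}$ is the set of $(\Phi,w)\in\mathcal{H}_\Phi\times\mathcal{H}_w$ with $R^e(w\circ\Phi)\le R^e(\bar w\circ\Phi)$ for all $\bar w\in\mathcal{H}_w$ and all $e\in\mathcal{E}_{tr}$; the set of invariant predictors is $\hat{\mathcal{S}}^{\mathsf{IV}}=\{w\circ\Phi:(\Phi,w)\in\mathcal{S}^{\mathsf{IV}}\}$. Ensemble game: given $\Phi\in\mathcal{H}_\Phi$, each environment $e$ chooses $w^e\in\mathcal{H}_w$ with utility $u_e=-R^e(w^{av}\circ\Phi)$, $w^{av}=\frac{1}{|\mathcal{E}_{tr}|}\sum_q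 w^q$. $\mathcal{S}^{\mathsf{EIRM}}$ is the set of $(\Phi,\{w^q\}_{q\in\mathcal{E}_{tr}})$ with $\Phi\in\mathcal{H}_\Phi$ and $\{w^q\}$ a pure Nash equilibrium of this game given $\Phi$ (no player can strictly increase its utility by unilaterally changing its $w^e$ within $\mathcal{H}_w$). $\hat{\mathcal{S}}^{\mathsf{EIRM}}=\{(\frac{1}{|\mathcal{E}_{tr}|}\sum_q w^q)\circ\Phi : (\Phi,\{w^q\})\in\mathcal{S}^{\mathsf{EIRM}}\}$. *)

theory Defs
  imports "HOL-Probability.Probability"
begin

definition risk ::
  "('e \<Rightarrow> ((real^'n) \<times> (real^'k)) measure) \<Rightarrow> (real^'k \<Rightarrow> real^'k \<Rightarrow> real)
   \<Rightarrow> 'e \<Rightarrow> (real^'n \<Rightarrow> real^'k) \<Rightarrow> real" where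
  "risk M loss e f = (\<integral>p. loss (f (fst p)) (snd p) \<partial>(M e))"

definition affine_closed :: "('z \<Rightarrow> real^'k) set \<Rightarrow> bool" where
  "affine_closed Hw \<longleftrightarrow>
     (\<forall>w1\<in>Hw. \<forall>w2\<in>Hw. (\<lambda>z. w1 z + w2 z) \<in> Hw) \<and>
     (\<forall>w\<in>Hw. \<forall>c::real. (\<lambda>z. c *\<^sub>R w z) \<in> Hw)"

definition S_IV ::
  "'e set \<Rightarrow> ('e \<Rightarrow> ((real^'n) \<times> (real^'k)) measure) \<Rightarrow> (real^'k \<Rightarrow> real^'k \<Rightarrow> real)
   \<Rightarrow> (real^'n \<Rightarrow> real^'d) set \<Rightarrow> (real^'d \<Rightarrow> real^'k) set
   \<Rightarrow> ((real^'n \<Rightarrow> real^'d) \<times> (real^'d \<Rightarrow> real^'k)) set" where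
  "S_IV E M loss HPhi Hw =
     {(\<Phi>, w). \<Phi> \<in> HPhi \<and> w \<in> Hw \<and>
        (\<forall>e\<in>E. \<forall>w'\<in>Hw. risk M loss e (w \<circ> \<Phi>) \<le> risk M loss e (w' \<circ> \<Phi>))}"

definition S_IV_hat where
  "S_IV_hat E M loss HPhi Hw = {w \<circ> \<Phi> | \<Phi> w. (\<Phi>, w) \<in> S_IV E M loss HPhi Hw}"

definition w_avg :: "'e set \<Rightarrow> ('e \<Rightarrow> 'z \<Rightarrow> real^'k) \<Rightarrow> 'z \<Rightarrow> real^'k" where
  "w_avg E ws = (\<lambda>z. (1 / real (card E)) *\<^sub>R (\<Sum>q\<in>E. ws q z))"

definition is_NE ::
  "'e set \<Rightarrow> ('e \<Rightarrow> ((real^'n) \<times> (real^'k)) measure) \<Rightarrow> (real^'k \<Rightarrow> real^'k \<Rightarrow> real)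
   \<Rightarrow> (real^'d \<Rightarrow> real^'k) set \<Rightarrow> (real^'n \<Rightarrow> real^'d)
   \<Rightarrow> ('e \<Rightarrow> real^'d \<Rightarrow> real^'k) \<Rightarrow> bool" where
  "is_NE E M loss Hw \<Phi> ws \<longleftrightarrow>
     (\<forall>q\<in>E. ws q \<in> Hw) \<and>
     (\<forall>e\<in>E. \<forall>w'\<in>Hw.
        - risk M loss e (w_avg E (ws(e := w')) \<circ> \<Phi>) \<le> - risk M loss e (w_avg E ws \<circ> \<Phi>))"

definition S_EIRM where
  "S_EIRM E M loss HPhi Hw = {(\<Phi>, ws). \<Phi> \<in> HPhi \<and> is_NE E M loss Hw \<Phi> ws}"

definition S_EIRM_hat where
  "S_EIRM_hat E M loss HPhi Hw =
     {w_avg E ws \<circ> \<Phi> | \<Phi> ws. (\<Phi>, ws) \<in> S_EIRM E M loss HPhi Hw}"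

end

theory Submission
  imports Defs
begin

lemma sum_upd_helper:
  fixes f :: "'e \<Rightarrow> 'a::ab_group_add"
  assumes "finite E" "e \<in> E"
  shows "(\<Sum>q\<in>E. (f(e:=a)) q) = (\<Sum>q\<in>E. f q) - f e + a"
proof -
  have "(\<Sum>q\<in>E. (f(e:=a)) q) = (f(e:=a)) e + (\<Sum>q\<in>E-{e}. (f(e:=a)) q)"
    using assms by (simp add: sum.remove)
  also have "(\<Sum>q\<in>E-{e}. (f(e:=a)) q) = (\<Sum>q\<in>E-{e}. f q)"
    by (rule sum.cong) auto
  also have "(\<Sum>q\<in>E. f q) = f e + (\<Sum>q\<in>E-{e}. f q)"
    using assms by (simp add: sum.remove)
  ultimately show ?thesis by (simp add: algebra_simps)
qed

lemma upd_apply: "(\<Sum>q\<in>E. (ws(e:=w')) q z) = (\<Sum>q\<in>E. ((\<lambda>q. ws q z)(e := w' z)) q)"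
  by (rule sum.cong) auto

lemma aff_add: "affine_closed Hw \<Longrightarrow> w1 \<in> Hw \<Longrightarrow> w2 \<in> Hw \<Longrightarrow> (\<lambda>z. w1 z + w2 z) \<in> Hw"
  unfolding affine_closed_def by blast

lemma aff_scl: "affine_closed Hw \<Longrightarrow> w \<in> Hw \<Longrightarrow> (\<lambda>z. c *\<^sub>R w z) \<in> Hw"
  unfolding affine_closed_def by blast

lemma sum_in_Hw:
  assumes "affine_closed Hw" "finite E" "E \<noteq> {}" "\<forall>q\<in>E. ws q \<in> Hw"
  shows "(\<lambda>z. \<Sum>q\<in>E. ws q z) \<in> Hw"
  using assms(2,3,4)
proof (induction E rule: finite_ne_induct)
  case (singleton x)
  then show ?case by simp
next
  case (insert x F)
  then have "(\<lambda>z. ws x z + (\<Sum>q\<in>F. ws q z)) \<in> Hw"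
    using insert by (intro aff_add[OF assms(1)]) auto
  then show ?case using insert by simp
qed

lemma avg_in_Hw:
  assumes "affine_closed Hw" "finite E" "E \<noteq> {}" "\<forall>q\<in>E. ws q \<in> Hw"
  shows "w_avg E ws \<in> Hw"
  unfolding w_avg_def by (rule aff_scl[OF assms(1) sum_in_Hw[OF assms]])

theorem corollary1:
  fixes E :: "'e set"
    and M :: "'e \<Rightarrow> ((real^'n) \<times> (real^'k)) measure"
    and loss :: "real^'k \<Rightarrow> real^'k \<Rightarrow> real"
    and HPhi :: "(real^'n \<Rightarrow> real^'d) set"
    and Hw :: "(real^'d \<Rightarrow> real^'k) set"
  assumes "finite E" and "E \<noteq> {}"
    and "\<And>e. e \<in> E \<Longrightarrow> prob_space (M e)"
    and "affine_closed Hw"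
  shows "S_IV_hat E M loss HPhi Hw = S_EIRM_hat E M loss HPhi Hw"
proof
  have nE: "real (card E) > 0" using assms(1,2) by (simp add: card_gt_0_iff)
  have add: "\<And>w1 w2. w1 \<in> Hw \<Longrightarrow> w2 \<in> Hw \<Longrightarrow> (\<lambda>z. w1 z + w2 z) \<in> Hw"
    and scl: "\<And>w c. w \<in> Hw \<Longrightarrow> (\<lambda>z. c *\<^sub>R w z) \<in> Hw"
    using assms(4) unfolding affine_closed_def by blast+
  show "S_IV_hat E M loss HPhi Hw \<subseteq> S_EIRM_hat E M loss HPhi Hw"
  proof
    fix f assume "f \<in> S_IV_hat E M loss HPhi Hw"
    then obtain \<Phi> w where f: "f = w \<circ> \<Phi>" and P: "\<Phi> \<in> HPhi" and w: "w \<in> Hw"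
      and opt: "\<forall>e\<in>E. \<forall>w'\<in>Hw. risk M loss e (w \<circ> \<Phi>) \<le> risk M loss e (w' \<circ> \<Phi>)"
      unfolding S_IV_hat_def S_IV_def by blast
    define ws where "ws = (\<lambda>q::'e. w)"
    have avg: "w_avg E ws = w"
      using nE unfolding w_avg_def ws_def by (auto simp: fun_eq_iff sum_constant_scaleR simp del: sum_constant)
    have "is_NE E M loss Hw \<Phi> ws"
      unfolding is_NE_def
    proof (intro conjI ballI)
      fix q assume "q \<in> E" then show "ws q \<in> Hw" using w ws_def by simp
    next
      fix e w' assume e: "e \<in> E" and w': "w' \<in> Hw"
      have eq: "w_avg E (ws(e := w')) =
         (\<lambda>z. (\<lambda>z. ((real (card E) - 1) / real (card E)) *\<^sub>R w z) z + (\<lambda>z. (1 / real (card E)) *\<^sub>R w' z) z)"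
      proof
        fix z
        have "(\<Sum>q\<in>E. (ws(e:=w')) q z) = (\<Sum>q\<in>E. ws q z) - ws e z + w' z"
          unfolding upd_apply using sum_upd_helper[OF assms(1) e] by simp
        also have "\<dots> = (real (card E) - 1) *\<^sub>R w z + w' z"
          unfolding ws_def by (simp add: scaleR_diff_left sum_constant_scaleR del: sum_constant)
        finally show "w_avg E (ws(e := w')) z = (\<lambda>z. ((real (card E) - 1) / real (card E)) *\<^sub>R w z) z + (\<lambda>z. (1 / real (card E)) *\<^sub>R w' z) z"
          unfolding w_avg_def by (simp add: scaleR_add_right)
      qed
      have "w_avg E (ws(e := w')) \<in> Hw" unfolding eq by (intro add scl w w')
      then show "- risk M loss e (w_avg E (ws(e := w')) \<circ> \<Phi>) \<le> - risk M loss e (w_avg E ws \<circ> \<Phi>)"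
        using opt e avg by simp
    qed
    then show "f \<in> S_EIRM_hat E M loss HPhi Hw"
      unfolding S_EIRM_hat_def S_EIRM_def using P f avg by blast
  qed
  show "S_EIRM_hat E M loss HPhi Hw \<subseteq> S_IV_hat E M loss HPhi Hw"
  proof
    fix f assume "f \<in> S_EIRM_hat E M loss HPhi Hw"
    then obtain \<Phi> ws where f: "f = w_avg E ws \<circ> \<Phi>" and P: "\<Phi> \<in> HPhi"
      and NE: "is_NE E M loss Hw \<Phi> ws"
      unfolding S_EIRM_hat_def S_EIRM_def by blast
    have wsH: "\<forall>q\<in>E. ws q \<in> Hw" using NE unfolding is_NE_def by blast
    have avH: "w_avg E ws \<in> Hw" by (rule avg_in_Hw[OF assms(4,1,2) wsH])
    have "\<forall>e\<in>E. \<forall>w''\<in>Hw. risk M loss e (w_avg E ws \<circ> \<Phi>) \<le> risk M loss e (w'' \<circ> \<Phi>)"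
    proof (intro ballI)
      fix e w'' assume e: "e \<in> E" and w'': "w'' \<in> Hw"
      define w' where "w' = (\<lambda>z. ws e z + (\<lambda>z. (\<lambda>z. real (card E) *\<^sub>R w'' z) z
                                + (\<lambda>z. (- real (card E)) *\<^sub>R w_avg E ws z) z) z)"
      have w'H: "w' \<in> Hw" unfolding w'_def using e wsH
        by (intro add scl w'' avH) auto
      have "w_avg E (ws(e := w')) = w''"
      proof
        fix z
        have s: "(\<Sum>q\<in>E. ws q z) = real (card E) *\<^sub>R w_avg E ws z"
          using nE unfolding w_avg_def by simp
        have "(\<Sum>q\<in>E. (ws(e:=w')) q z) = (\<Sum>q\<in>E. ws q z) - ws e z + w' z"
          unfolding upd_apply using sum_upd_helper[OF assms(1) e] by simp
        also have "\<dots> = real (card E) *\<^sub>R w'' z"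
          unfolding w'_def s by (simp add: algebra_simps)
        finally show "w_avg E (ws(e := w')) z = w'' z"
          using nE unfolding w_avg_def by simp
      qed
      then show "risk M loss e (w_avg E ws \<circ> \<Phi>) \<le> risk M loss e (w'' \<circ> \<Phi>)"
        using NE e w'H unfolding is_NE_def by force
    qed
    then show "f \<in> S_IV_hat E M loss HPhi Hw"
      unfolding S_IV_hat_def S_IV_def using P f avH by blast
  qed
qed

end
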